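(* Let $n\ge2$, let $A=(a_{ij})\in\mathbb{R}^{n\times n}$ be pseudo-diagonalizable, and suppose $\max\{a_{11},\dots,a_{nn}\}\le0$. Then $\lambda(A)=0$, $\Gamma(A_\lambda)=I\oplus A$, and $d(A)=1$. Moreover, for any $i\in[n]$, letting $v^{(i)}$ be the vector obtained from the $i$-th column $A_i$ of $A$ by replacing its $i$-th entry by $0$, the set $\{v^{(i)}\}$ is a basis of $V(A)$, i.e. $V(A)=\{\alpha\otimes v^{(i)}:\alpha\in\overline{\mathbb{R}}\}$.
   Context: Max-plus conventions: $\overline{\mathbb{R}}=\mathbb{R}\cup\{-\infty\}$, $\varepsilon=-\infty$, $\oplus=\max$ (entrywise for matrices), $\otimes=+$; $(A\otimes B)_{ij}=\max_t(A_{it}+B_{tj})$, $(\alpha\otimes x)_i=\alpha+x_i$. $I$ is the matrix with $0$ on the diagonal and $\varepsilon$ elsewhere. $P$ is invertible iff it has exactly one real entry in each row and column (others $\varepsilon$); $A,B$ similar if $B=P^{-1}\otimes A\otimes P$ for invertible $P$. Pseudo-diagonal: real diagonal, off-diagonal entries equal to real $0$; pseudo-diagonalizable: similar to a pseudo-diagonal matrix. For finite $A$: $\lambda(A)$ is the maximum cycle mean $\max\{(a_{i_1i_2}+\dots+a_{i_ki_1})/k\}$ over $k\ge1$ and distinct $i_1,\dots,i_k$, the unique eigenvalue; $V(A)=\{x\in\overline{\mathbb{R}}^n:A\otimes x=\lambda(A)\otimes x\}$; $A_\lambda=(-\lambda(A))\otimes A$; $\Gamma(A)=A\oplus A^2\oplus\dots\oplus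 A^n$. A basis of a subspace is an independent generating set with respect to max-combinations; $d(A)$ is the number of elements of a basis of $V(A)$. *)

theory Defs
  imports "HOL-Library.Extended_Real"
begin

text \<open>Max-plus algebra over Rbar = R \<union> {-\<infinity>}, represented inside ereal by
  excluding the value \<infinity>. Index set: a finite type 'n (n = CARD('n)).\<close>

type_synonym 'n mpmat = "'n \<Rightarrow> 'n \<Rightarrow> ereal"
type_synonym 'n mpvec = "'n \<Rightarrow> ereal"

definition rbar :: "ereal \<Rightarrow> bool" where
  "rbar a \<longleftrightarrow> a \<noteq> \<infinity>"

definition rbar_mat :: "('n::finite) mpmat \<Rightarrow> bool" where
  "rbar_mat M \<longleftrightarrow> (\<forall>i j. rbar (M i j))"

definition rbar_vec :: "('n::finite) mpvec \<Rightarrow> bool" where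
  "rbar_vec x \<longleftrightarrow> (\<forall>i. rbar (x i))"

definition lift :: "('n \<Rightarrow> 'n \<Rightarrow> real) \<Rightarrow> 'n mpmat" where
  "lift A = (\<lambda>i j. ereal (A i j))"

definition mp_add :: "('n::finite) mpmat \<Rightarrow> 'n mpmat \<Rightarrow> 'n mpmat" where
  "mp_add A B = (\<lambda>i j. max (A i j) (B i j))"

definition mp_mult :: "('n::finite) mpmat \<Rightarrow> 'n mpmat \<Rightarrow> 'n mpmat" where
  "mp_mult A B = (\<lambda>i j. Max (range (\<lambda>t. A i t + B t j)))"

definition mp_mv :: "('n::finite) mpmat \<Rightarrow> 'n mpvec \<Rightarrow> 'n mpvec" where
  "mp_mv A x = (\<lambda>i. Max (range (\<lambda>t. A i t + x t)))"

definition mp_smult :: "ereal \<Rightarrow> ('n::finite) mpvec \<Rightarrow> 'n mpvec" where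
  "mp_smult a x = (\<lambda>i. a + x i)"

definition mp_id :: "('n::finite) mpmat" where
  "mp_id = (\<lambda>i j. if i = j then 0 else -\<infinity>)"

primrec mp_pow :: "('n::finite) mpmat \<Rightarrow> nat \<Rightarrow> 'n mpmat" where
  "mp_pow M 0 = mp_id"
| "mp_pow M (Suc k) = mp_mult M (mp_pow M k)"

definition mp_Gamma :: "('n::finite) mpmat \<Rightarrow> 'n mpmat" where
  "mp_Gamma M = (\<lambda>i j. Max ((\<lambda>k. mp_pow M k i j) ` {1..card (UNIV :: 'n set)}))"

definition mp_invertible :: "('n::finite) mpmat \<Rightarrow> bool" where
  "mp_invertible P \<longleftrightarrow>
     (\<forall>i j. P i j = -\<infinity> \<or> P i j \<noteq> \<infinity> \<and> P i j \<noteq> -\<infinity>) \<and>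
     (\<forall>i. \<exists>!j. P i j \<noteq> -\<infinity>) \<and> (\<forall>j. \<exists>!i. P i j \<noteq> -\<infinity>)"

definition mp_similar :: "('n::finite) mpmat \<Rightarrow> 'n mpmat \<Rightarrow> bool" where
  "mp_similar A B \<longleftrightarrow> (\<exists>P Q. mp_invertible P \<and> mp_mult Q P = mp_id \<and> mp_mult P Q = mp_id
      \<and> B = mp_mult (mp_mult Q A) P)"

definition pseudo_diagonal :: "('n::finite) mpmat \<Rightarrow> bool" where
  "pseudo_diagonal D \<longleftrightarrow> (\<forall>i. D i i \<noteq> \<infinity> \<and> D i i \<noteq> -\<infinity>) \<and> (\<forall>i j. i \<noteq> j \<longrightarrow> D i j = 0)"

definition pseudo_diagonalizable :: "('n::finite) mpmat \<Rightarrow> bool" where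
  "pseudo_diagonalizable A \<longleftrightarrow> (\<exists>D. pseudo_diagonal D \<and> mp_similar A D)"

definition cycle_mean :: "('n \<Rightarrow> 'n \<Rightarrow> real) \<Rightarrow> 'n list \<Rightarrow> real" where
  "cycle_mean A xs =
     (\<Sum>j<length xs. A (xs ! j) (xs ! ((j + 1) mod length xs))) / real (length xs)"

definition mcm :: "('n::finite \<Rightarrow> 'n \<Rightarrow> real) \<Rightarrow> real" where
  "mcm A = Max {cycle_mean A xs | xs. xs \<noteq> [] \<and> distinct xs}"

definition A_lam :: "('n::finite \<Rightarrow> 'n \<Rightarrow> real) \<Rightarrow> 'n \<Rightarrow> 'n \<Rightarrow> real" where
  "A_lam A = (\<lambda>i j. A i j - mcm A)"

definition eigspace :: "('n::finite \<Rightarrow> 'n \<Rightarrow> real) \<Rightarrow> 'n mpvec set" where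
  "eigspace A = {x. rbar_vec x \<and> mp_mv (lift A) x = mp_smult (ereal (mcm A)) x}"

text \<open>Max-combinations of finitely many elements of S (the empty combination is
  the all-(-\<infinity>) vector).\<close>
definition mp_span :: "('n::finite) mpvec set \<Rightarrow> 'n mpvec set" where
  "mp_span S = {x. \<exists>F \<alpha>. finite F \<and> F \<subseteq> S \<and> (\<forall>v\<in>F. rbar (\<alpha> v)) \<and>
      x = (\<lambda>i. Max (insert (-\<infinity>) ((\<lambda>v. \<alpha> v + v i) ` F)))}"

definition mp_independent :: "('n::finite) mpvec set \<Rightarrow> bool" where
  "mp_independent S \<longleftrightarrow> (\<forall>v\<in>S. v \<notin> mp_span (S - {v}))"

definition mp_basis :: "('n::finite) mpvec set \<Rightarrow> 'n mpvec set \<Rightarrow> bool" where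
  "mp_basis B W \<longleftrightarrow> B \<subseteq> W \<and> mp_independent B \<and> mp_span B = W"

definition mp_d :: "('n::finite \<Rightarrow> 'n \<Rightarrow> real) \<Rightarrow> nat" where
  "mp_d A = card (SOME B. mp_basis B (eigspace A))"

end

theory Submission imports Defs begin

lemma Max_single:
  fixes g :: "'n::finite \<Rightarrow> ereal"
  assumes "\<And>k. k \<noteq> a \<Longrightarrow> g k = -\<infinity>"
  shows "Max (range g) = g a"
proof (rule Max_eqI)
  fix y assume "y \<in> range g"
  then obtain k where "y = g k" by auto
  then show "y \<le> g a" using assms by (cases "k = a") auto
qed auto

lemma pd_struct:
  fixes A :: "'n::finite \<Rightarrow> 'n \<Rightarrow> real"
  assumes "pseudo_diagonalizable (lift A)"
  shows "\<exists>p. \<forall>x y. x \<noteq> y \<longrightarrow> A x y = p x - p y"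
proof -
  obtain D P Q where D: "pseudo_diagonal D" and Pinv: "mp_invertible P"
    and PQ: "mp_mult P Q = mp_id" and DD: "D = mp_mult (mp_mult Q (lift A)) P"
    using assms unfolding pseudo_diagonalizable_def mp_similar_def by blast
  define f where "f t = (THE j. P t j \<noteq> -\<infinity>)" for t
  have inv1: "\<And>i j. P i j = -\<infinity> \<or> P i j \<noteq> \<infinity> \<and> P i j \<noteq> -\<infinity>"
    and ex1: "\<And>t. \<exists>!j. P t j \<noteq> -\<infinity>" and ex1c: "\<And>j. \<exists>!i. P i j \<noteq> -\<infinity>"
    using Pinv unfolding mp_invertible_def by auto
  have f1: "P t (f t) \<noteq> -\<infinity>" for t unfolding f_def using theI'[OF ex1] .
  have f2: "P t j \<noteq> -\<infinity> \<Longrightarrow> j = f t" for t j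
  proof -
    assume a: "P t j \<noteq> -\<infinity>"
    obtain j0 where "P t j0 \<noteq> -\<infinity>" and u: "\<And>y. P t y \<noteq> -\<infinity> \<Longrightarrow> y = j0"
      using ex1[of t] by (elim ex1E) blast
    have "j = j0" by (rule u[OF a])
    moreover have "f t = j0" by (rule u[OF f1[of t]])
    ultimately show "j = f t" by simp
  qed
  have f3: "P t (f t) \<noteq> \<infinity>" for t using inv1[of t "f t"] f1[of t] by simp
  have col: "P k j \<noteq> -\<infinity> \<Longrightarrow> P k' j \<noteq> -\<infinity> \<Longrightarrow> k = k'" for k k' j
  proof -
    assume a: "P k j \<noteq> -\<infinity>" "P k' j \<noteq> -\<infinity>"
    obtain i0 where "P i0 j \<noteq> -\<infinity>" and u: "\<And>y. P y j \<noteq> -\<infinity> \<Longrightarrow> y = i0"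
      using ex1c[of j] by (elim ex1E) blast
    have "k = i0" by (rule u[OF a(1)])
    moreover have "k' = i0" by (rule u[OF a(2)])
    ultimately show "k = k'" by simp
  qed
  define p where "p t = real_of_ereal (P t (f t))" for t
  have Pp: "P t (f t) = ereal (p t)" for t using f1 f3 unfolding p_def
    by (cases "P t (f t)") auto
  have Pm: "k \<noteq> f t \<Longrightarrow> P t k = -\<infinity>" for t k using f2 by blast
  have Qn: "Q s j \<noteq> \<infinity>" for s j
  proof
    assume "Q s j = \<infinity>"
    have "P j s + Q s j \<le> mp_mult P Q j j" unfolding mp_mult_def by (rule Max_ge) auto
    with \<open>Q s j = \<infinity>\<close> have "mp_mult P Q j j = \<infinity>" by simp
    moreover have "mp_id j j = (0::ereal)" unfolding mp_id_def by simp
    ultimately show False using PQ by simp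
  qed
  have Qrow: "Q (f t) j = (if j = t then ereal (- p t) else -\<infinity>)" for t j
  proof -
    have "mp_mult P Q t j = P t (f t) + Q (f t) j" unfolding mp_mult_def
      by (rule Max_single) (simp add: Pm Qn)
    with PQ have e: "ereal (p t) + Q (f t) j = (if t = j then 0 else -\<infinity>)"
      by (simp add: Pp mp_id_def fun_eq_iff)
    show ?thesis using Qn[of "f t" j] e by (cases "Q (f t) j") (auto split: if_splits)
  qed
  have QA: "mp_mult Q (lift A) (f x) y = ereal (A x y - p x)" for x y
  proof -
    have "mp_mult Q (lift A) (f x) y = Q (f x) x + lift A x y" unfolding mp_mult_def
      by (rule Max_single) (simp add: Qrow lift_def)
    then show ?thesis by (simp add: Qrow lift_def)
  qed
  have Dxy: "D (f x) (f y) = ereal (A x y - p x + p y)" for x y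
  proof -
    have "D (f x) (f y) = mp_mult Q (lift A) (f x) y + P y (f y)" unfolding DD mp_mult_def[of "mp_mult Q (lift A)" P]
    proof (rule Max_single)
      fix k assume "k \<noteq> y"
      then have "P k (f y) = -\<infinity>" using col f1 by blast
      then show "mp_mult Q (lift A) (f x) k + P k (f y) = -\<infinity>" by (simp add: QA)
    qed
    then show ?thesis by (simp add: QA Pp)
  qed
  have "x \<noteq> y \<longrightarrow> A x y = p x - p y" for x y
  proof
    assume "x \<noteq> y"
    have "f x \<noteq> f y"
    proof
      assume "f x = f y"
      then have "P y (f x) \<noteq> -\<infinity>" using f1[of y] by simp
      then show False using col[OF f1[of x]] \<open>x \<noteq> y\<close> by blast
    qed
    then have "D (f x) (f y) = 0" using D unfolding pseudo_diagonal_def by blast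
    then show "A x y = p x - p y" using Dxy[of x y] by (simp add: zero_ereal_def)
  qed
  then show ?thesis by blast
qed

lemma rot_sum:
  fixes g :: "nat \<Rightarrow> real"
  shows "(\<Sum>j<Suc m. g ((j+1) mod Suc m)) = (\<Sum>j<Suc m. g j)"
proof -
  have "(\<Sum>j<Suc m. g ((j+1) mod Suc m)) = (\<Sum>j<m. g ((j+1) mod Suc m)) + g 0"
    by (simp add: sum.lessThan_Suc)
  also have "(\<Sum>j<m. g ((j+1) mod Suc m)) = (\<Sum>j<m. g (Suc j))"
    by (rule sum.cong) auto
  also have "(\<Sum>j<m. g (Suc j)) + g 0 = (\<Sum>j<Suc m. g j)"
    by (subst sum.lessThan_Suc_shift) simp
  finally show ?thesis .
qed

lemma other_ex:
  assumes "card (UNIV :: 'n::finite set) \<ge> 2"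
  shows "\<exists>t::'n. t \<noteq> k"
proof (rule ccontr)
  assume "\<not> ?thesis"
  then have "UNIV \<subseteq> {k}" by auto
  then have "card (UNIV :: 'n set) \<le> card {k}" by (rule card_mono[rotated]) simp
  with assms show False by simp
qed

lemma mcm_zero:
  fixes A :: "'n::finite \<Rightarrow> 'n \<Rightarrow> real"
  assumes c2: "card (UNIV :: 'n set) \<ge> 2"
    and Ale: "\<And>x y. A x y \<le> p x - p y"
    and Aeq: "\<And>x y. x \<noteq> y \<Longrightarrow> A x y = p x - p y"
  shows "mcm A = 0"
proof -
  have fin: "finite {cycle_mean A xs | xs. xs \<noteq> [] \<and> distinct xs}"
  proof -
    have "{cycle_mean A xs | xs. xs \<noteq> [] \<and> distinct xs} \<subseteq> cycle_mean A ` {xs. set xs \<subseteq> UNIV \<and> distinct xs}"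
      by auto
    moreover have "finite (cycle_mean A ` {xs. set xs \<subseteq> (UNIV :: 'n set) \<and> distinct xs})"
      by (rule finite_imageI, rule finite_subset_distinct) simp
    ultimately show ?thesis by (rule finite_subset)
  qed
  have le: "cycle_mean A xs \<le> 0" if ne: "xs \<noteq> []" for xs
  proof -
    obtain m where m: "length xs = Suc m" using ne by (cases xs) auto
    have "(\<Sum>j<length xs. A (xs ! j) (xs ! ((j + 1) mod length xs)))
        \<le> (\<Sum>j<length xs. p (xs ! j) - p (xs ! ((j + 1) mod length xs)))"
      by (rule sum_mono) (rule Ale)
    also have "\<dots> = 0"
      unfolding sum_subtractf m using rot_sum[of "\<lambda>j. p (xs ! j)" m] by simp
    finally show ?thesis unfolding cycle_mean_def by (intro divide_nonpos_nonneg) auto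
  qed
  obtain a :: 'n where True by blast
  obtain b where "b \<noteq> a" using other_ex[OF c2] by blast
  have "cycle_mean A [a, b] = (A a b + A b a) / 2"
    unfolding cycle_mean_def by (simp add: numeral_2_eq_2)
  also have "\<dots> = 0" using Aeq \<open>b \<noteq> a\<close> by simp
  finally have c0: "cycle_mean A [a, b] = 0" .
  have z: "0 \<in> {cycle_mean A xs | xs. xs \<noteq> [] \<and> distinct xs}"
    by (rule CollectI, rule exI[of _ "[a, b]"]) (use c0 \<open>b \<noteq> a\<close> in auto)
  show ?thesis unfolding mcm_def
    by (rule Max_eqI[OF fin]) (use le z in auto)
qed


lemma pow_le:
  fixes A :: "'n::finite \<Rightarrow> 'n \<Rightarrow> real"
  assumes Ale: "\<And>x y. A x y \<le> p x - p y"
  shows "mp_pow (lift A) k i j \<le> ereal (p i - p j)"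
proof (induction k arbitrary: i)
  case 0
  show ?case by (cases "i = j") (auto simp: mp_id_def)
next
  case (Suc k)
  have "ereal (A i t) + mp_pow (lift A) k t j \<le> ereal (p i - p j)" for t
  proof -
    have "ereal (A i t) + mp_pow (lift A) k t j \<le> ereal (p i - p t) + ereal (p t - p j)"
      by (rule add_mono) (use Ale Suc in auto)
    then show ?thesis by simp
  qed
  then show ?case by (auto simp: mp_mult_def lift_def)
qed

lemma pow1_ge:
  fixes A :: "'n::finite \<Rightarrow> 'n \<Rightarrow> real"
  shows "ereal (A i j) \<le> mp_pow (lift A) (Suc 0) i j"
proof -
  have "ereal (A i j) + mp_id j j \<le> mp_pow (lift A) (Suc 0) i j"
    unfolding mp_pow.simps mp_mult_def lift_def by (rule Max_ge) auto
  then show ?thesis by (simp add: mp_id_def)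
qed

lemma pow2_ge:
  fixes A :: "'n::finite \<Rightarrow> 'n \<Rightarrow> real"
  shows "ereal (A i t) + ereal (A t j) \<le> mp_pow (lift A) (Suc (Suc 0)) i j"
proof -
  have "ereal (A i t) + mp_pow (lift A) (Suc 0) t j \<le> mp_pow (lift A) (Suc (Suc 0)) i j"
    by (simp only: mp_pow.simps(2)[of _ "Suc 0"] mp_mult_def[of "lift A" "mp_pow (lift A) (Suc 0)"], rule Max_ge) (auto simp: lift_def)
  moreover have "ereal (A i t) + ereal (A t j) \<le> ereal (A i t) + mp_pow (lift A) (Suc 0) t j"
    by (rule add_left_mono) (rule pow1_ge)
  ultimately show ?thesis by order
qed

lemma gamma_eq:
  fixes A :: "'n::finite \<Rightarrow> 'n \<Rightarrow> real"
  assumes c2: "card (UNIV :: 'n set) \<ge> 2"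
    and Ale: "\<And>x y. A x y \<le> p x - p y"
    and Aeq: "\<And>x y. x \<noteq> y \<Longrightarrow> A x y = p x - p y"
    and Adiag: "\<forall>i. A i i \<le> 0"
  shows "mp_Gamma (lift A) = mp_add mp_id (lift A)"
proof (intro ext)
  fix i j
  have rhs: "mp_add mp_id (lift A) i j = ereal (p i - p j)"
  proof (cases "i = j")
    case True
    have "A i i \<le> 0" using Adiag by blast
    then show ?thesis using True by (simp add: mp_add_def mp_id_def lift_def max_def)
  next
    case False
    then show ?thesis by (simp add: mp_add_def mp_id_def lift_def Aeq)
  qed
  have wit: "\<exists>k\<in>{1..card (UNIV :: 'n set)}. ereal (p i - p j) \<le> mp_pow (lift A) k i j"
  proof (cases "i = j")
    case True
    obtain t where "t \<noteq> i" using other_ex[OF c2] by blast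
    have "ereal (A i t) + ereal (A t j) \<le> mp_pow (lift A) (Suc (Suc 0)) i j" by (rule pow2_ge)
    moreover have "ereal (A i t) + ereal (A t j) = ereal (p i - p j)"
    proof -
      have "A i t = p i - p t" using Aeq \<open>t \<noteq> i\<close> by auto
      moreover have "A t j = p t - p j" using Aeq \<open>t \<noteq> i\<close> True by auto
      ultimately show ?thesis by simp
    qed
    ultimately show ?thesis using c2 by (intro bexI[of _ "Suc (Suc 0)"]) auto
  next
    case False
    have "ereal (p i - p j) \<le> mp_pow (lift A) (Suc 0) i j" using pow1_ge[of A i j] Aeq[OF False] by simp
    then show ?thesis using c2 by (intro bexI[of _ "Suc 0"]) auto
  qed
  have "mp_Gamma (lift A) i j = ereal (p i - p j)"
    unfolding mp_Gamma_def
  proof (rule Max_eqI)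
    show "finite ((\<lambda>k. mp_pow (lift A) k i j) ` {1..card (UNIV :: 'n set)})" by simp
    show "y \<le> ereal (p i - p j)" if "y \<in> (\<lambda>k. mp_pow (lift A) k i j) ` {1..card (UNIV :: 'n set)}" for y
      using that pow_le[OF Ale] by auto
    show "ereal (p i - p j) \<in> (\<lambda>k. mp_pow (lift A) k i j) ` {1..card (UNIV :: 'n set)}"
    proof -
      obtain k where k: "k \<in> {1..card (UNIV :: 'n set)}" "ereal (p i - p j) \<le> mp_pow (lift A) k i j"
        using wit by blast
      have "mp_pow (lift A) k i j = ereal (p i - p j)"
        using k(2) pow_le[OF Ale, where i=i and j=j and k=k] by (rule antisym[rotated])
      then show ?thesis using k(1) by (intro image_eqI[where x=k]) auto
    qed
  qed
  then show "mp_Gamma (lift A) i j = mp_add mp_id (lift A) i j" using rhs by simp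
qed


lemma eig_char:
  fixes A :: "'n::finite \<Rightarrow> 'n \<Rightarrow> real"
  assumes c2: "card (UNIV :: 'n set) \<ge> 2"
    and Ale: "\<And>x y. A x y \<le> p x - p y"
    and Aeq: "\<And>x y. x \<noteq> y \<Longrightarrow> A x y = p x - p y"
    and m0: "mcm A = 0"
  shows "eigspace A = {mp_smult \<alpha> (\<lambda>k. ereal (p k - p i)) | \<alpha>. rbar \<alpha>}"
proof -
  define w where "w = (\<lambda>k. ereal (p k - p i))"
  have E: "x \<in> eigspace A \<longleftrightarrow> rbar_vec x \<and> mp_mv (lift A) x = x" for x
    unfolding eigspace_def m0 mp_smult_def by simp
  show ?thesis unfolding w_def[symmetric]
  proof (intro set_eqI iffI)
    fix x assume "x \<in> eigspace A"
    then have rx: "\<And>k. x k \<noteq> \<infinity>" and eq: "mp_mv (lift A) x = x"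
      using E unfolding rbar_vec_def rbar_def by auto
    have ineq: "ereal (p k - p t) + x t \<le> x k" if "t \<noteq> k" for k t
    proof -
      have "ereal (A k t) + x t \<le> mp_mv (lift A) x k"
        unfolding mp_mv_def lift_def by (rule Max_ge) auto
      then show ?thesis using eq Aeq[of k t] that by simp
    qed
    have xk: "x k = x i + w k" for k
    proof (cases "k = i")
      case True then show ?thesis by (simp add: w_def)
    next
      case False
      have h1: "ereal (p k - p i) + x i \<le> x k" using ineq False by auto
      have h2: "ereal (p i - p k) + x k \<le> x i" using ineq False by auto
      show ?thesis using h1 h2 rx[of k] rx[of i] unfolding w_def
        by (cases "x k"; cases "x i") (auto simp: add.commute)
    qed
    have "x = mp_smult (x i) w" unfolding mp_smult_def by (rule ext) (rule xk)
    moreover have "rbar (x i)" using rx rbar_def by auto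
    ultimately show "x \<in> {mp_smult \<alpha> w | \<alpha>. rbar \<alpha>}" by blast
  next
    fix x assume "x \<in> {mp_smult \<alpha> w | \<alpha>. rbar \<alpha>}"
    then obtain \<alpha> where x: "x = mp_smult \<alpha> w" and ra: "rbar \<alpha>" by blast
    show "x \<in> eigspace A"
    proof (cases \<alpha>)
      case PInf then show ?thesis using ra rbar_def by auto
    next
      case MInf
      then have xm: "x = (\<lambda>k. -\<infinity>)" unfolding x mp_smult_def w_def by auto
      have "mp_mv (lift A) x = x" unfolding xm mp_mv_def lift_def by simp
      then show ?thesis using E xm by (simp add: rbar_vec_def rbar_def)
    next
      case (real a)
      then have xr: "x = (\<lambda>k. ereal (a + p k - p i))" unfolding x mp_smult_def w_def by auto
      have "mp_mv (lift A) x k = x k" for k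
      proof -
        obtain t where t: "t \<noteq> k" using other_ex[OF c2] by blast
        show ?thesis unfolding mp_mv_def lift_def xr
        proof (rule Max_eqI)
          fix y assume "y \<in> range (\<lambda>s. ereal (A k s) + ereal (a + p s - p i))"
          then show "y \<le> ereal (a + p k - p i)" using Ale by (auto simp: algebra_simps)
        next
          have "ereal (A k t) + ereal (a + p t - p i) = ereal (a + p k - p i)"
          proof -
            have "A k t = p k - p t" using Aeq t by auto
            then show ?thesis by simp
          qed
          then show "ereal (a + p k - p i) \<in> range (\<lambda>s. ereal (A k s) + ereal (a + p s - p i))"
            by (intro range_eqI[where x=t]) simp
        qed simp
      qed
      moreover have "rbar_vec x" unfolding xr rbar_vec_def rbar_def by simp
      ultimately show ?thesis using E by blast
    qed
  qed
qed

lemma span_empty: "mp_span {} = {(\<lambda>k. -\<infinity>)}"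
  unfolding mp_span_def by auto

lemma zero_in_span: "(\<lambda>k. -\<infinity>) \<in> mp_span S"
  unfolding mp_span_def by (rule CollectI, rule exI[of _ "{}"]) auto

lemma span_single:
  assumes "\<And>k. u k \<noteq> \<infinity>"
  shows "mp_span {u} = {mp_smult \<alpha> u | \<alpha>. rbar \<alpha>}"
proof (intro set_eqI iffI)
  fix x assume "x \<in> mp_span {u}"
  then obtain F \<alpha> where F: "F \<subseteq> {u}" and ra: "\<forall>v\<in>F. rbar (\<alpha> v)"
    and x: "x = (\<lambda>i. Max (insert (-\<infinity>) ((\<lambda>v. \<alpha> v + v i) ` F)))"
    unfolding mp_span_def by blast
  show "x \<in> {mp_smult \<alpha> u | \<alpha>. rbar \<alpha>}"
  proof (cases "F = {}")
    case True
    have "x = mp_smult (-\<infinity>) u"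
    proof
      fix k
      have "-\<infinity> + u k = -\<infinity>" using assms[of k] by (cases "u k") auto
      then show "x k = mp_smult (-\<infinity>) u k" unfolding x mp_smult_def using True by simp
    qed
    moreover have "rbar (-\<infinity>)" by (simp add: rbar_def)
    ultimately show ?thesis by blast
  next
    case False
    then have "F = {u}" using F by auto
    have "x = mp_smult (\<alpha> u) u" unfolding x mp_smult_def \<open>F = {u}\<close> by simp
    then show ?thesis using ra \<open>F = {u}\<close> by blast
  qed
next
  fix x assume "x \<in> {mp_smult \<alpha> u | \<alpha>. rbar \<alpha>}"
  then obtain a where x: "x = mp_smult a u" and ra: "rbar a" by blast
  show "x \<in> mp_span {u}" unfolding mp_span_def
    by (rule CollectI, rule exI[of _ "{u}"], rule exI[of _ "\<lambda>_. a"]) (auto simp: x mp_smult_def ra)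
qed


lemma basis_card:
  fixes W :: "('n::finite) mpvec set" and w :: "'n mpvec"
  assumes W: "W = {mp_smult \<alpha> w | \<alpha>. rbar \<alpha>}"
    and wr: "\<And>k. \<exists>r. w k = ereal r"
    and wz: "w \<noteq> (\<lambda>k. -\<infinity>)"
    and B: "mp_basis B W"
  shows "card B = 1"
proof -
  have BW: "B \<subseteq> W" and ind: "mp_independent B" and sp: "mp_span B = W"
    using B unfolding mp_basis_def by auto
  have zB: "(\<lambda>k. -\<infinity>) \<notin> B"
    using ind zero_in_span unfolding mp_independent_def by blast
  have "w \<in> W" unfolding W
    by (rule CollectI, rule exI[of _ 0]) (auto simp: mp_smult_def rbar_def)
  have "B \<noteq> {}"
  proof
    assume "B = {}"
    then have "W = {(\<lambda>k. -\<infinity>)}" using sp by (simp add: span_empty)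
    with \<open>w \<in> W\<close> wz show False by simp
  qed
  then obtain b1 where b1: "b1 \<in> B" by blast
  have realform: "\<exists>a. b = (\<lambda>k. ereal a + w k)" if bB: "b \<in> B" for b
  proof -
    obtain \<alpha> where b: "b = mp_smult \<alpha> w" and "rbar \<alpha>" using bB BW W by blast
    show ?thesis
    proof (cases \<alpha>)
      case (real r) then show ?thesis using b mp_smult_def by auto
    next
      case PInf then show ?thesis using \<open>rbar \<alpha>\<close> rbar_def by auto
    next
      case MInf
      have "b = (\<lambda>k. -\<infinity>)"
      proof
        fix k obtain r where "w k = ereal r" using wr by blast
        then show "b k = -\<infinity>" unfolding b mp_smult_def MInf by simp
      qed
      then show ?thesis using zB bB by simp
    qed
  qed
  obtain a1 where a1: "b1 = (\<lambda>k. ereal a1 + w k)" using realform b1 by blast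
  have "B = {b1}"
  proof (rule ccontr)
    assume "B \<noteq> {b1}"
    then obtain b2 where b2: "b2 \<in> B" "b2 \<noteq> b1" using b1 by blast
    obtain a2 where a2: "b2 = (\<lambda>k. ereal a2 + w k)" using realform b2(1) by blast
    have "b1 \<in> mp_span (B - {b1})" unfolding mp_span_def
    proof (rule CollectI, rule exI[of _ "{b2}"], rule exI[of _ "\<lambda>_. ereal (a1 - a2)"], intro conjI)
      show "b1 = (\<lambda>i. Max (insert (-\<infinity>) ((\<lambda>v. ereal (a1 - a2) + v i) ` {b2})))"
      proof
        fix i
        obtain r where "w i = ereal r" using wr by blast
        then show "b1 i = Max (insert (-\<infinity>) ((\<lambda>v. ereal (a1 - a2) + v i) ` {b2}))"
          by (simp add: a1 a2)
      qed
    qed (use b2 in \<open>auto simp: rbar_def\<close>)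
    with b1 ind show False unfolding mp_independent_def by blast
  qed
  then show ?thesis by simp
qed

theorem theorem5p8:
  fixes A :: "'n::finite \<Rightarrow> 'n \<Rightarrow> real"
  assumes "card (UNIV :: 'n set) \<ge> 2"
    and "pseudo_diagonalizable (lift A)"
    and "\<forall>i. A i i \<le> 0"
  shows "mcm A = 0
    \<and> mp_Gamma (lift (A_lam A)) = mp_add mp_id (lift A)
    \<and> mp_d A = 1
    \<and> (\<forall>i. let v = (\<lambda>k. if k = i then 0 else ereal (A k i)) in
          mp_basis {v} (eigspace A)
          \<and> eigspace A = {mp_smult \<alpha> v | \<alpha>. rbar \<alpha>})"
proof -
  note c2 = assms(1)
  obtain p where Aeq: "\<And>x y. x \<noteq> y \<Longrightarrow> A x y = p x - p y"
    using pd_struct[OF assms(2)] by blast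
  have Ale: "A x y \<le> p x - p y" for x y
    using assms(3) Aeq by (cases "x = y") auto
  have m0: "mcm A = 0" by (rule mcm_zero[OF c2 Ale Aeq])
  have lam: "A_lam A = A" unfolding A_lam_def m0 by simp
  have G: "mp_Gamma (lift (A_lam A)) = mp_add mp_id (lift A)"
    unfolding lam by (rule gamma_eq[OF c2 Ale Aeq assms(3)])
  have part: "mp_basis {v} (eigspace A) \<and> eigspace A = {mp_smult \<alpha> v | \<alpha>. rbar \<alpha>}"
    if v: "v = (\<lambda>k. if k = i then 0 else ereal (A k i))" for i v
  proof -
    have vw: "v = (\<lambda>k. ereal (p k - p i))" unfolding v using Aeq by (auto simp: zero_ereal_def)
    have E: "eigspace A = {mp_smult \<alpha> v | \<alpha>. rbar \<alpha>}"
      unfolding vw by (rule eig_char[OF c2 Ale Aeq m0])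
    have S: "mp_span {v} = eigspace A" unfolding E by (rule span_single) (simp add: vw)
    have "v \<in> eigspace A" unfolding E
      by (rule CollectI, rule exI[of _ 0]) (auto simp: mp_smult_def rbar_def)
    moreover have "mp_independent {v}"
    proof -
      have "v \<noteq> (\<lambda>k. -\<infinity>)"
      proof
        assume "v = (\<lambda>k. -\<infinity>)"
        then have "v i = -\<infinity>" by simp
        then show False by (simp add: vw)
      qed
      then show ?thesis unfolding mp_independent_def by (simp add: span_empty)
    qed
    ultimately show ?thesis using S E unfolding mp_basis_def by auto
  qed
  obtain i0 :: 'n where True by blast
  define v0 where "v0 = (\<lambda>k. if k = i0 then 0 else ereal (A k i0))"
  have P0: "mp_basis {v0} (eigspace A)" "eigspace A = {mp_smult \<alpha> v0 | \<alpha>. rbar \<alpha>}"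
    using part[OF v0_def] by (rule conjunct1, rule conjunct2)
  have v0r: "\<exists>r. v0 k = ereal r" for k unfolding v0_def by (auto simp: zero_ereal_def)
  have v0z: "v0 \<noteq> (\<lambda>k. -\<infinity>)"
  proof
    assume "v0 = (\<lambda>k. -\<infinity>)"
    then have "v0 i0 = -\<infinity>" by simp
    then show False unfolding v0_def by simp
  qed
  have d: "mp_d A = 1" unfolding mp_d_def
    by (rule someI2[of _ "{v0}"], rule P0(1)) (rule basis_card[OF P0(2) v0r v0z])
  have H: "\<forall>i. let v = (\<lambda>k. if k = i then 0 else ereal (A k i)) in
          mp_basis {v} (eigspace A)
          \<and> eigspace A = {mp_smult \<alpha> v | \<alpha>. rbar \<alpha>}"
  proof
    fix i show "let v = (\<lambda>k. if k = i then 0 else ereal (A k i)) in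
          mp_basis {v} (eigspace A)
          \<and> eigspace A = {mp_smult \<alpha> v | \<alpha>. rbar \<alpha>}"
      unfolding Let_def by (rule part[OF refl])
  qed
  show ?thesis by (intro conjI m0 G d H)
qed

end
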